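(* Fix $a\in(0,1/2)$, $b\in(0,1)$ and $n\in\mathbb{N}\cup\{\infty\}$. Consider the spread process with parameters $(\mathcal{P}_n,v_0,\mathcal{P}_n,a,b)$ and let $i_t$ be the index of the truth frontier after round $t$. There exist constants $K,c_1,c_2,c_3>0$ depending only on $a,b$ such that for all $t\ge1$, $$\Pr\big[i_t\le\min\{bt+Kt^{1-c_3},\,n\}\big]\ge1-e^{-c_1t^{c_2}}.$$
   Context: Spread process. Fix $a,b\in[0,1]$. Let $G=(V,E)$ be a connected, locally finite, undirected graph, $r\in V$ a root, and $T$ a BFS spanning tree of $G$ rooted at $r$, oriented away from $r$, with parent $p(v)$ for $v\ne r$. The spread process with parameters $(G,r,T,a,b)$ is the random sequence $f_t:V\to\{+1,-1,\bot\}$: $f_t(r)=+1$ for all $t$; $f_0(v)=\bot$ for $v\ne r$; for $t\ge1$ and each $v\ne r$ independently: if $f_{t-1}(v)=\bot\ne f_{t-1}(p(v))$ then $f_t(v)=f_{t-1}(p(v))$ w.p. $1-a$ and $-f_{t-1}(p(v))$ w.p. $a$; if $f_{t-1}(v)\neq\bot$ then $f_t(v)=f_{t-1}(p(v))$ w.p. $b$ and $f_{t-1}(v)$ w.p. $1-b$; if $f_{t-1}(v)=f_{t-1}(p(v))=\bot$ then $f_t(v)=\bot$. Path: $\mathcal{P}_n$ has vertices $v_0,\dots,v_n$ (infinitely many if $n=\infty$), root $v_0$, $p(v_i)=v_{i-1}$; it is its own BFS tree. Truth frontier on the path after round $t$: the node $v_{i_t}$ with $i_t=\max\{i:0\le i\le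 n,\ f_t(v_0)=\dots=f_t(v_i)=+1\}$. *)

theory Defs
  imports "HOL-Probability.Probability" "HOL-Library.Extended_Nat"
begin

text \<open>Spin values: +1, -1 and bottom (undefined opinion).\<close>
datatype spin = Pos | Neg | Bot

fun flip :: "spin \<Rightarrow> spin" where
  "flip Pos = Neg" | "flip Neg = Pos" | "flip Bot = Bot"

text \<open>Path P_n with vertices v_0, ..., v_n (n = \<infinity> allowed), vertex v_i encoded by i,
  root v_0, parent of v_i is v_(i-1).  A configuration is a map nat \<Rightarrow> spin; indices
  i > n are not vertices and are kept at Bot.\<close>

definition local_step :: "real \<Rightarrow> real \<Rightarrow> spin \<Rightarrow> spin \<Rightarrow> spin pmf" where
  "local_step a b x p =
     (if x = Bot \<and> p \<noteq> Bot then map_pmf (\<lambda>c. if c then flip p else p) (bernoulli_pmf a)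
      else if x \<noteq> Bot then map_pmf (\<lambda>c. if c then p else x) (bernoulli_pmf b)
      else return_pmf Bot)"

text \<open>Vertices whose update is not deterministically Bot (finite for all reachable
  configurations); all other vertices stay Bot.  Independent updates via Pi_pmf.\<close>
definition active :: "enat \<Rightarrow> (nat \<Rightarrow> spin) \<Rightarrow> nat set" where
  "active n f = {i. 1 \<le> i \<and> enat i \<le> n \<and> (f i \<noteq> Bot \<or> f (i - 1) \<noteq> Bot)}"

definition spread_step :: "real \<Rightarrow> real \<Rightarrow> enat \<Rightarrow> (nat \<Rightarrow> spin) \<Rightarrow> (nat \<Rightarrow> spin) pmf" where
  "spread_step a b n f =
     map_pmf (\<lambda>g. g(0 := Pos)) (Pi_pmf (active n f) Bot (\<lambda>i. local_step a b (f i) (f (i - 1))))"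

definition init_conf :: "nat \<Rightarrow> spin" where
  "init_conf = (\<lambda>i. if i = 0 then Pos else Bot)"

fun spread_path :: "real \<Rightarrow> real \<Rightarrow> enat \<Rightarrow> nat \<Rightarrow> (nat \<Rightarrow> spin) pmf" where
  "spread_path a b n 0 = return_pmf init_conf"
| "spread_path a b n (Suc t) = bind_pmf (spread_path a b n t) (spread_step a b n)"

definition frontier :: "enat \<Rightarrow> (nat \<Rightarrow> spin) \<Rightarrow> nat" where
  "frontier n f = (GREATEST i. enat i \<le> n \<and> (\<forall>j\<le>i. f j = Pos))"

end

theory Submission
  imports Defs
begin


definition step_det :: "enat \<Rightarrow> nat \<Rightarrow> (nat \<Rightarrow> spin) \<Rightarrow> (nat \<Rightarrow> bool) \<Rightarrow> nat \<Rightarrow> spin" where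
  "step_det n s f c i = (if i = 0 then Pos
     else if enat i \<le> n \<and> i \<le> s then (if c i then f (i - 1) else f i)
     else if enat i \<le> n \<and> i = Suc s then (if c i then flip (f s) else f s)
     else Bot)"

fun run :: "enat \<Rightarrow> (nat \<Rightarrow> nat \<Rightarrow> bool) \<Rightarrow> nat \<Rightarrow> nat \<Rightarrow> spin" where
  "run n \<omega> 0 = init_conf"
| "run n \<omega> (Suc s) = step_det n s (run n \<omega> s) (\<omega> s)"

definition inv_conf :: "enat \<Rightarrow> nat \<Rightarrow> (nat \<Rightarrow> spin) \<Rightarrow> bool" where
  "inv_conf n s f \<longleftrightarrow> f 0 = Pos \<and> (\<forall>i. f i \<noteq> Bot \<longleftrightarrow> i \<le> s \<and> enat i \<le> n)"

lemma flip_Bot_iff[simp]: "flip x = Bot \<longleftrightarrow> x = Bot"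
  by (cases x) auto

lemma inv_run: "inv_conf n s (run n \<omega> s)"
proof (induction s)
  case 0
  have "enat 0 \<le> n" by (metis zero_enat_def zero_le)
  then show ?case by (auto simp: inv_conf_def init_conf_def)
next
  case (Suc s)
  have e: "enat (i - 1) \<le> n" if "enat i \<le> n" for i
    using that by (meson diff_le_self enat_ord_simps(1) order_trans)
  have e2: "enat s \<le> n" if "enat (Suc s) \<le> n"
    using that e[of "Suc s"] by simp
  show ?case using Suc e e2 unfolding inv_conf_def
    by (auto simp: step_det_def split: if_splits)
qed

lemma run_cong: "(\<And>s'. s' < s \<Longrightarrow> \<omega> s' = \<omega>' s') \<Longrightarrow> run n \<omega> s = run n \<omega>' s"
  by (induction s) auto

fun DF :: "(nat \<Rightarrow> bool) \<Rightarrow> nat \<Rightarrow> spin" where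
  "DF F 0 = Pos"
| "DF F (Suc j) = (if F j then flip (DF F j) else DF F j)"

definition D :: "(nat \<Rightarrow> nat \<Rightarrow> bool) \<Rightarrow> nat \<Rightarrow> spin" where
  "D \<omega> = DF (\<lambda>j. \<omega> j (Suc j))"

fun land :: "(nat \<Rightarrow> nat \<Rightarrow> bool) \<Rightarrow> nat \<Rightarrow> nat \<Rightarrow> nat" where
  "land \<omega> 0 i = i"
| "land \<omega> (Suc s) i = (if 1 \<le> i \<and> i \<le> s \<and> \<omega> s i then land \<omega> s (i - 1) else land \<omega> s i)"

lemma land_ge: "s \<le> i \<Longrightarrow> land \<omega> s i = i"
  by (induction s) auto

lemma land_le: "land \<omega> s i \<le> i"
proof (induction s arbitrary: i)
  case (Suc s)
  show ?case using Suc.IH[of i] Suc.IH[of "i - 1"] by auto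
qed simp

lemma land_mono_Suc: "land \<omega> s i \<le> land \<omega> s (Suc i)"
proof (induction s arbitrary: i)
  case 0 then show ?case by simp
next
  case (Suc s)
  have a: "land \<omega> s (i - 1) \<le> land \<omega> s i" for i
    using Suc.IH[of "i - 1"] by (cases i) auto
  show ?case using Suc.IH[of i] a[of i] by auto
qed

lemma land_mono: "i \<le> i' \<Longrightarrow> land \<omega> s i \<le> land \<omega> s i'"
  using lift_Suc_mono_le[of "land \<omega> s", OF land_mono_Suc] by blast

lemma land_Suc_le: "land \<omega> (Suc s) i \<le> land \<omega> s i"
  using land_mono[of "i - 1" i \<omega> s] by auto

lemma land_Suc_ge: "land \<omega> s i \<le> land \<omega> (Suc s) (Suc i)"
  using land_mono_Suc[of \<omega> s i] by auto

lemma run_D: "i \<le> s \<Longrightarrow> enat i \<le> n \<Longrightarrow> run n \<omega> s i = D \<omega> (land \<omega> s i)"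
proof (induction s arbitrary: i)
  case 0
  then show ?case by (simp add: init_conf_def D_def)
next
  case (Suc s)
  have e: "enat (i - 1) \<le> n"
    using Suc.prems by (meson diff_le_self enat_ord_simps(1) order_trans)
  show ?case
  proof (cases "i = 0")
    case True
    then show ?thesis using land_le[of \<omega> "Suc s" 0] by (simp add: step_det_def D_def)
  next
    case False
    show ?thesis
    proof (cases "i \<le> s")
      case True
      then show ?thesis using False Suc e by (auto simp: step_det_def)
    next
      case ns: False
      then have i: "i = Suc s" using Suc.prems by auto
      have es: "enat s \<le> n" using Suc.prems i by (metis Suc_n_not_le_n e diff_Suc_1 le_cases)
      have "run n \<omega> s s = D \<omega> s" using Suc.IH[of s] es land_ge[of s s \<omega>] by simp
      then show ?thesis using i Suc.prems land_ge[of "Suc s" "Suc s" \<omega>]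
        by (simp add: step_det_def D_def)
    qed
  qed
qed

lemma run_Bot: "\<not> (i \<le> s \<and> enat i \<le> n) \<Longrightarrow> run n \<omega> s i = Bot"
  using inv_run[of n s \<omega>] unfolding inv_conf_def by blast

lemma run_0: "run n \<omega> s 0 = Pos"
  using inv_run[of n s \<omega>] unfolding inv_conf_def by blast

lemma frontier_run:
  fixes n \<omega> t
  defines "f \<equiv> run n \<omega> t"
  shows "frontier n f \<le> t" "enat (frontier n f) \<le> n" "\<And>j. j \<le> frontier n f \<Longrightarrow> f j = Pos"
proof -
  let ?P = "\<lambda>i. enat i \<le> n \<and> (\<forall>j\<le>i. f j = Pos)"
  have P0: "?P 0" using run_0[of n \<omega> t] by (auto simp: f_def simp flip: zero_enat_def)
  have bd: "?P i \<Longrightarrow> i \<le> t" for i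
    using run_Bot[of i t n \<omega>] by (auto simp: f_def)
  have "?P (frontier n f)" unfolding frontier_def
    by (rule GreatestI_nat[where P="?P", OF P0]) (use bd in blast)
  moreover have "frontier n f \<le> t"
    using bd calculation by blast
  ultimately show "frontier n f \<le> t" "enat (frontier n f) \<le> n" "\<And>j. j \<le> frontier n f \<Longrightarrow> f j = Pos"
    by auto
qed

fun Lt :: "(nat \<Rightarrow> nat \<Rightarrow> bool) \<Rightarrow> nat \<Rightarrow> nat \<Rightarrow> nat" where
  "Lt \<omega> J 0 = J"
| "Lt \<omega> J (Suc k) = Lt \<omega> J k + (if \<omega> (J + k) (Lt \<omega> J k) then 1 else 0)"

lemma Lt_props:
  assumes "1 \<le> J"
  shows "J \<le> Lt \<omega> J k \<and> Lt \<omega> J k \<le> J + k \<and> J \<le> land \<omega> (J + k) (Lt \<omega> J k)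
         \<and> land \<omega> (J + k) (Lt \<omega> J k - 1) < J"
proof (induction k)
  case 0
  then show ?case using assms land_ge[of J J \<omega>] land_le[of \<omega> J "J - 1"] by auto
next
  case (Suc k)
  define L where "L = Lt \<omega> J k"
  have IH: "J \<le> L" "L \<le> J + k" "J \<le> land \<omega> (J + k) L" "land \<omega> (J + k) (L - 1) < J"
    using Suc unfolding L_def by auto
  show ?case
  proof (cases "\<omega> (J + k) L")
    case False
    then have "Lt \<omega> J (Suc k) = L" by (simp add: L_def)
    moreover have "land \<omega> (Suc (J + k)) L = land \<omega> (J + k) L"
      using False IH assms by auto
    moreover have "land \<omega> (Suc (J + k)) (L - 1) < J"
      using land_Suc_le[of \<omega> "J + k" "L - 1"] IH by linarith
    ultimately show ?thesis using IH by simp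
  next
    case True
    then have "Lt \<omega> J (Suc k) = Suc L" by (simp add: L_def)
    moreover have "J \<le> land \<omega> (Suc (J + k)) (Suc L)"
      using land_Suc_ge[of \<omega> "J + k" L] IH by linarith
    moreover have "land \<omega> (Suc (J + k)) L = land \<omega> (J + k) (L - 1)"
      using True IH assms by auto
    ultimately show ?thesis using IH by simp
  qed
qed



lemma Pi_pmf_map':
  assumes "finite A"
  shows "Pi_pmf A d (\<lambda>x. map_pmf (h x) (p x)) =
         map_pmf (\<lambda>g x. if x \<in> A then h x (g x) else d) (Pi_pmf A d' p)"
proof -
  have "Pi_pmf A d (\<lambda>x. map_pmf (h x) (p x)) = Pi_pmf A d (\<lambda>x. bind_pmf (p x) (\<lambda>c. return_pmf (h x c)))"
    by (simp add: map_pmf_def)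
  also have "\<dots> = bind_pmf (Pi_pmf A d' p) (\<lambda>f. Pi_pmf A d (\<lambda>x. return_pmf (h x (f x))))"
    using assms by (rule Pi_pmf_bind)
  also have "\<dots> = bind_pmf (Pi_pmf A d' p) (\<lambda>f. return_pmf (\<lambda>x. if x \<in> A then h x (f x) else d))"
    using assms by simp
  finally show ?thesis by (simp add: map_pmf_def)
qed

definition theta :: "real \<Rightarrow> real \<Rightarrow> nat \<Rightarrow> (nat \<Rightarrow> bool) pmf" where
  "theta a b s = Pi_pmf {1..Suc s} False (\<lambda>i. if i \<le> s then bernoulli_pmf b else bernoulli_pmf a)"

definition Omega :: "real \<Rightarrow> real \<Rightarrow> nat \<Rightarrow> (nat \<Rightarrow> nat \<Rightarrow> bool) pmf" where
  "Omega a b t = Pi_pmf {..<t} (\<lambda>_. False) (theta a b)"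

lemma step_eq:
  assumes I: "inv_conf n s f"
  shows "spread_step a b n f = map_pmf (step_det n s f) (theta a b s)"
proof -
  let ?A = "{i \<in> {1..Suc s}. enat i \<le> n}"
  have e: "enat (i - 1) \<le> n" if "enat i \<le> n" for i
    using that by (meson diff_le_self enat_ord_simps(1) order_trans)
  have act: "active n f = ?A"
  proof (intro set_eqI iffI)
    fix i assume "i \<in> active n f"
    then have "1 \<le> i" "enat i \<le> n" "f i \<noteq> Bot \<or> f (i - 1) \<noteq> Bot" unfolding active_def by auto
    then show "i \<in> ?A" using I unfolding inv_conf_def by auto
  next
    fix i assume "i \<in> ?A"
    then have "1 \<le> i" "enat i \<le> n" "i \<le> Suc s" by auto
    moreover have "f (i - 1) \<noteq> Bot" using I e calculation unfolding inv_conf_def by auto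
    ultimately show "i \<in> active n f" unfolding active_def by auto
  qed
  define pb where "pb = (\<lambda>i::nat. if i \<le> s then bernoulli_pmf b else bernoulli_pmf a)"
  define h where "h = (\<lambda>i c. if i \<le> s then (if c then f (i - 1) else f i)
                          else (if c then flip (f s) else f s))"
  have ls: "local_step a b (f i) (f (i - 1)) = map_pmf (h i) (pb i)" if "i \<in> ?A" for i
  proof (cases "i \<le> s")
    case True
    then have "f i \<noteq> Bot" using I that unfolding inv_conf_def by auto
    then show ?thesis using True by (auto simp: local_step_def h_def pb_def intro!: map_pmf_cong)
  next
    case False
    then have i: "i = Suc s" using that by auto
    have "f i = Bot" using I i unfolding inv_conf_def by (metis Suc_n_not_le_n)
    moreover have "f s \<noteq> Bot" using I i that e[of i] unfolding inv_conf_def by auto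
    ultimately show ?thesis using i by (simp add: local_step_def h_def pb_def)
  qed
  have "Pi_pmf (active n f) Bot (\<lambda>i. local_step a b (f i) (f (i - 1)))
        = Pi_pmf ?A Bot (\<lambda>i. map_pmf (h i) (pb i))"
    unfolding act by (rule Pi_pmf_cong) (use ls in auto)
  also have "\<dots> = map_pmf (\<lambda>g x. if x \<in> ?A then h x (g x) else Bot) (Pi_pmf ?A False pb)"
    by (rule Pi_pmf_map') simp
  also have "Pi_pmf ?A False pb = map_pmf (\<lambda>g x. if x \<in> ?A then g x else False) (theta a b s)"
    unfolding theta_def pb_def[symmetric] by (rule Pi_pmf_subset) auto
  finally have X0: "Pi_pmf (active n f) Bot (\<lambda>i. local_step a b (f i) (f (i - 1))) =
     map_pmf (\<lambda>g x. if x \<in> ?A then h x (g x) else Bot)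
       (map_pmf (\<lambda>g x. if x \<in> ?A then g x else False) (theta a b s))" .
  have X: "Pi_pmf (active n f) Bot (\<lambda>i. local_step a b (f i) (f (i - 1))) =
     map_pmf (\<lambda>g x. if x \<in> ?A then h x (g x) else Bot) (theta a b s)"
    unfolding X0 pmf.map_comp o_def by (intro map_pmf_cong refl) (auto simp: fun_eq_iff)
  have "spread_step a b n f = map_pmf (\<lambda>g. (\<lambda>x. if x \<in> ?A then h x (g x) else Bot)(0 := Pos)) (theta a b s)"
    unfolding spread_step_def X pmf.map_comp o_def by simp
  also have "\<dots> = map_pmf (step_det n s f) (theta a b s)"
    by (intro map_pmf_cong refl) (auto simp: fun_eq_iff step_det_def h_def)
  finally show ?thesis .
qed

lemma spread_path_eq:
  "spread_path a b n t = map_pmf (\<lambda>w. run n w t) (Omega a b t)"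
proof (induction t)
  case 0
  then show ?case by (simp add: Omega_def)
next
  case (Suc t)
  have "spread_path a b n (Suc t) = bind_pmf (Omega a b t) (\<lambda>w. spread_step a b n (run n w t))"
    by (simp add: Suc map_pmf_def bind_assoc_pmf bind_return_pmf)
  also have "\<dots> = bind_pmf (Omega a b t) (\<lambda>w. map_pmf (step_det n t (run n w t)) (theta a b t))"
    by (simp add: step_eq[OF inv_run])
  also have "\<dots> = map_pmf (\<lambda>p. run n ((snd p)(t := fst p)) (Suc t)) (pair_pmf (theta a b t) (Omega a b t))"
  proof -
    have rc: "run n (w(t := y)) t = run n w t" for w y
      by (rule run_cong) auto
    show ?thesis
      unfolding pair_pmf_def map_bind_pmf
      by (subst bind_commute_pmf) (simp add: rc map_pmf_def bind_assoc_pmf bind_return_pmf)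
  qed
  also have "\<dots> = map_pmf (\<lambda>w. run n w (Suc t)) (Omega a b (Suc t))"
    unfolding Omega_def lessThan_Suc
    by (subst Pi_pmf_insert) (auto simp: pmf.map_comp o_def case_prod_unfold)
  finally show ?case .
qed



lemma Lt_cong: "(\<And>s. J \<le> s \<Longrightarrow> s < J + k \<Longrightarrow> w s = w' s) \<Longrightarrow> Lt w J k = Lt w' J k"
  by (induction k) auto

lemma Lt_dist:
  assumes J: "1 \<le> J" and b: "b \<in> {0..1}" and A: "finite A" "{J..<J+k} \<subseteq> A"
  shows "map_pmf (\<lambda>w. Lt w J k) (Pi_pmf A (\<lambda>_. False) (theta a b)) = map_pmf ((+) J) (binomial_pmf k b)"
  using A
proof (induction k arbitrary: A)
  case 0
  then show ?case using b by (simp add: binomial_pmf_0)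
next
  case (Suc k)
  define m where "m = J + k"
  have mA: "m \<in> A" using Suc.prems m_def by auto
  have A': "A = insert m (A - {m})" using mA by auto
  have IH: "map_pmf (\<lambda>w. Lt w J k) (Pi_pmf (A - {m}) (\<lambda>_. False) (theta a b)) = map_pmf ((+) J) (binomial_pmf k b)"
    using Suc.prems by (intro Suc.IH) (auto simp: m_def)
  have lt: "Lt (f(m := y)) J (Suc k) = Lt f J k + (if y (Lt f J k) then 1 else 0)" for f y
  proof -
    have "Lt (f(m := y)) J k = Lt f J k" by (rule Lt_cong) (auto simp: m_def)
    then show ?thesis by (simp add: m_def)
  qed
  have comp: "map_pmf (\<lambda>y. y v) (theta a b m) = bernoulli_pmf b" if "1 \<le> v" "v \<le> m" for v
    unfolding theta_def using that by (subst Pi_pmf_component) auto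
  have rng: "1 \<le> Lt f J k" "Lt f J k \<le> m" for f
    using Lt_props[OF J, of f k] J by (auto simp: m_def)
  have "map_pmf (\<lambda>w. Lt w J (Suc k)) (Pi_pmf A (\<lambda>_. False) (theta a b))
      = map_pmf (\<lambda>(y, f). Lt f J k + (if y (Lt f J k) then 1 else 0))
          (pair_pmf (theta a b m) (Pi_pmf (A - {m}) (\<lambda>_. False) (theta a b)))"
    by (subst A', subst Pi_pmf_insert) (use Suc.prems in \<open>auto simp del: Lt.simps simp add: pmf.map_comp o_def case_prod_unfold lt\<close>)
  also have "\<dots> = bind_pmf (Pi_pmf (A - {m}) (\<lambda>_. False) (theta a b))
        (\<lambda>f. map_pmf (\<lambda>c. Lt f J k + (if c then 1 else 0)) (map_pmf (\<lambda>y. y (Lt f J k)) (theta a b m)))"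
    unfolding pair_pmf_def map_bind_pmf
    by (subst bind_commute_pmf) (simp add: map_pmf_def bind_assoc_pmf bind_return_pmf)
  also have "\<dots> = bind_pmf (Pi_pmf (A - {m}) (\<lambda>_. False) (theta a b))
        (\<lambda>f. map_pmf (\<lambda>c. Lt f J k + (if c then 1 else 0)) (bernoulli_pmf b))"
    by (intro bind_pmf_cong refl, subst comp[OF rng]) (rule refl)
  also have "\<dots> = bind_pmf (map_pmf (\<lambda>w. Lt w J k) (Pi_pmf (A - {m}) (\<lambda>_. False) (theta a b)))
        (\<lambda>v. map_pmf (\<lambda>c. v + (if c then 1 else 0)) (bernoulli_pmf b))"
    by (simp add: bind_map_pmf)
  also have "\<dots> = bind_pmf (binomial_pmf k b) (\<lambda>x. map_pmf (\<lambda>c. J + x + (if c then 1 else 0)) (bernoulli_pmf b))"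
    unfolding IH by (simp add: bind_map_pmf)
  also have "\<dots> = map_pmf ((+) J) (binomial_pmf (Suc k) b)"
    unfolding binomial_pmf_Suc[OF b]
    by (subst bind_commute_pmf) (simp add: map_pmf_def bind_assoc_pmf bind_return_pmf add_ac)
  finally show ?case .
qed

lemma binom_tail:
  assumes "0 < N" "b \<in> {0..1}" "0 \<le> \<delta>"
  shows "measure_pmf.prob (binomial_pmf N b) {x. \<delta> \<le> \<bar>real x - real N * b\<bar>} \<le> 2 * exp (-2 * \<delta>\<^sup>2 / real N)"
proof -
  interpret binomial_distribution N b by unfold_locales (use assms in auto)
  show ?thesis using prob_abs_ge[OF assms(1) assms(3)] by simp
qed

lemma Lt_tail:
  assumes J: "1 \<le> J" "J < t" and b: "b \<in> {0..1}" and d: "0 \<le> \<delta>"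
  shows "measure_pmf.prob (Omega a b t)
           {w. \<delta> \<le> \<bar>real (Lt w J (t - J)) - real J - real (t - J) * b\<bar>}
         \<le> 2 * exp (-2 * \<delta>\<^sup>2 / real (t - J))"
proof -
  have "measure_pmf.prob (Omega a b t)
           {w. \<delta> \<le> \<bar>real (Lt w J (t - J)) - real J - real (t - J) * b\<bar>}
      = measure_pmf.prob (map_pmf (\<lambda>w. Lt w J (t - J)) (Omega a b t))
           {x. \<delta> \<le> \<bar>real x - real J - real (t - J) * b\<bar>}"
    by simp
  also have "map_pmf (\<lambda>w. Lt w J (t - J)) (Omega a b t) = map_pmf ((+) J) (binomial_pmf (t - J) b)"
    unfolding Omega_def by (rule Lt_dist) (use J b in auto)
  also have "measure_pmf.prob \<dots> {x. \<delta> \<le> \<bar>real x - real J - real (t - J) * b\<bar>}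
      = measure_pmf.prob (binomial_pmf (t - J) b) {x. \<delta> \<le> \<bar>real x - real (t - J) * b\<bar>}"
    by simp
  also have "\<dots> \<le> 2 * exp (-2 * \<delta>\<^sup>2 / real (t - J))"
    by (rule binom_tail) (use J b d in auto)
  finally show ?thesis .
qed



lemma Pi_pmf_pair:
  assumes "finite A"
  shows "Pi_pmf A (d1, d2) (\<lambda>x. pair_pmf (p x) (q x)) =
         map_pmf (\<lambda>(f, g) x. (f x, g x)) (pair_pmf (Pi_pmf A d1 p) (Pi_pmf A d2 q))"
proof -
  have "Pi_pmf A (d1, d2) (\<lambda>x. pair_pmf (p x) (q x)) =
        Pi_pmf A (d1, d2) (\<lambda>x. bind_pmf (p x) (\<lambda>u. map_pmf (Pair u) (q x)))"
    by (simp add: pair_pmf_def map_pmf_def)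
  also have "\<dots> = bind_pmf (Pi_pmf A d1 p) (\<lambda>f. Pi_pmf A (d1, d2) (\<lambda>x. map_pmf (Pair (f x)) (q x)))"
    using assms by (rule Pi_pmf_bind)
  also have "\<dots> = bind_pmf (Pi_pmf A d1 p) (\<lambda>f. map_pmf (\<lambda>g x. if x \<in> A then (f x, g x) else (d1, d2)) (Pi_pmf A d2 q))"
    using assms by (simp add: Pi_pmf_map'[where d'=d2])
  also have "\<dots> = map_pmf (\<lambda>(f, g) x. if x \<in> A then (f x, g x) else (d1, d2)) (pair_pmf (Pi_pmf A d1 p) (Pi_pmf A d2 q))"
    by (simp add: pair_pmf_def map_pmf_def bind_assoc_pmf bind_return_pmf)
  also have "\<dots> = map_pmf (\<lambda>(f, g) x. (f x, g x)) (pair_pmf (Pi_pmf A d1 p) (Pi_pmf A d2 q))"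
  proof (intro map_pmf_cong refl)
    fix z assume z: "z \<in> set_pmf (pair_pmf (Pi_pmf A d1 p) (Pi_pmf A d2 q))"
    obtain f g where fg: "z = (f, g)" "f \<in> set_pmf (Pi_pmf A d1 p)" "g \<in> set_pmf (Pi_pmf A d2 q)"
      using z by (cases z) auto
    have "\<forall>x. x \<notin> A \<longrightarrow> f x = d1" using fg(2) set_Pi_pmf_subset[OF assms, of d1 p] by blast
    moreover have "\<forall>x. x \<notin> A \<longrightarrow> g x = d2" using fg(3) set_Pi_pmf_subset[OF assms, of d2 q] by blast
    ultimately show "(\<lambda>(f, g) x. if x \<in> A then (f x, g x) else (d1, d2)) z = (\<lambda>(f, g) x. (f x, g x)) z"
      unfolding fg(1) by (simp add: fun_eq_iff)
  qed
  finally show ?thesis .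
qed

definition Cs :: "real \<Rightarrow> nat \<Rightarrow> (nat \<Rightarrow> bool) pmf" where
  "Cs b s = Pi_pmf {1..s} False (\<lambda>_. bernoulli_pmf b)"

definition CP :: "real \<Rightarrow> nat \<Rightarrow> (nat \<Rightarrow> nat \<Rightarrow> bool) pmf" where
  "CP b t = Pi_pmf {..<t} (\<lambda>_. False) (Cs b)"

definition FP :: "real \<Rightarrow> nat \<Rightarrow> (nat \<Rightarrow> bool) pmf" where
  "FP a t = Pi_pmf {..<t} False (\<lambda>_. bernoulli_pmf a)"

definition Phi :: "nat \<Rightarrow> (nat \<Rightarrow> bool) \<times> (nat \<Rightarrow> nat \<Rightarrow> bool) \<Rightarrow> nat \<Rightarrow> nat \<Rightarrow> bool" where
  "Phi t = (\<lambda>(F, C) s. if s < t then (C s)(Suc s := F s) else (\<lambda>_. False))"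

lemma theta_split: "theta a b s = map_pmf (\<lambda>(d, c). c(Suc s := d)) (pair_pmf (bernoulli_pmf a) (Cs b s))"
proof -
  have "theta a b s = Pi_pmf (insert (Suc s) {1..s}) False (\<lambda>i. if i \<le> s then bernoulli_pmf b else bernoulli_pmf a)"
    unfolding theta_def by (simp add: atLeastAtMostSuc_conv)
  also have "\<dots> = map_pmf (\<lambda>(y, f). f(Suc s := y)) (pair_pmf (bernoulli_pmf a)
       (Pi_pmf {1..s} False (\<lambda>i. if i \<le> s then bernoulli_pmf b else bernoulli_pmf a)))"
    by (subst Pi_pmf_insert) auto
  also have "Pi_pmf {1..s} False (\<lambda>i. if i \<le> s then bernoulli_pmf b else bernoulli_pmf a) = Cs b s"
    unfolding Cs_def by (rule Pi_pmf_cong) auto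
  finally show ?thesis .
qed

lemma Omega_split: "Omega a b t = map_pmf (Phi t) (pair_pmf (FP a t) (CP b t))"
proof -
  have "Omega a b t = Pi_pmf {..<t} (\<lambda>_. False)
          (\<lambda>s. map_pmf (\<lambda>(d, c). c(Suc s := d)) (pair_pmf (bernoulli_pmf a) (Cs b s)))"
    unfolding Omega_def by (rule Pi_pmf_cong) (auto simp: theta_split)
  also have "\<dots> = map_pmf (\<lambda>h s. if s \<in> {..<t} then (\<lambda>(d, c). c(Suc s := d)) (h s) else (\<lambda>_. False))
        (Pi_pmf {..<t} (False, \<lambda>_. False) (\<lambda>s. pair_pmf (bernoulli_pmf a) (Cs b s)))"
    by (rule Pi_pmf_map') simp
  also have "Pi_pmf {..<t} (False, \<lambda>_. False) (\<lambda>s. pair_pmf (bernoulli_pmf a) (Cs b s))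
      = map_pmf (\<lambda>(f, g) x. (f x, g x)) (pair_pmf (FP a t) (CP b t))"
    unfolding FP_def CP_def by (rule Pi_pmf_pair) simp
  also have "map_pmf (\<lambda>h s. if s \<in> {..<t} then (\<lambda>(d, c). c(Suc s := d)) (h s) else (\<lambda>_. False))
        (map_pmf (\<lambda>(f, g) x. (f x, g x)) (pair_pmf (FP a t) (CP b t))) = map_pmf (Phi t) (pair_pmf (FP a t) (CP b t))"
    unfolding pmf.map_comp by (intro map_pmf_cong refl) (auto simp: Phi_def fun_eq_iff)
  finally show ?thesis .
qed

lemma prob_pair_le:
  assumes "\<And>y. y \<in> set_pmf N \<Longrightarrow> measure_pmf.prob M {x. (x, y) \<in> X} \<le> c" and "0 \<le> c"
  shows "measure_pmf.prob (pair_pmf M N) X \<le> c"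
proof -
  have pe: "pair_pmf M N = bind_pmf N (\<lambda>y. map_pmf (\<lambda>x. (x, y)) M)"
    unfolding pair_pmf_def map_pmf_def by (subst bind_commute_pmf) simp
  have "emeasure (measure_pmf (pair_pmf M N)) X = (\<integral>\<^sup>+y. emeasure (measure_pmf (map_pmf (\<lambda>x. (x, y)) M)) X \<partial>N)"
    unfolding pe by simp
  also have "\<dots> \<le> (\<integral>\<^sup>+y. ennreal c \<partial>N)"
  proof (intro nn_integral_mono_AE AE_pmfI)
    fix y assume "y \<in> set_pmf N"
    then have "measure_pmf.prob (map_pmf (\<lambda>x. (x, y)) M) X \<le> c"
      using assms(1) by (simp add: vimage_def)
    then show "emeasure (measure_pmf (map_pmf (\<lambda>x. (x, y)) M)) X \<le> ennreal c"
      by (simp add: measure_pmf.emeasure_eq_measure ennreal_leI)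
  qed
  also have "\<dots> = ennreal c" by simp
  finally show ?thesis
    using assms(2) by (simp add: measure_pmf.emeasure_eq_measure)
qed

lemma prob_pair_prod:
  "measure_pmf.prob (pair_pmf M N) (A \<times> B) = measure_pmf.prob M A * measure_pmf.prob N B"
proof -
  have "measure_pmf.prob (pair_pmf M N) (A \<times> B) = measure_pmf.prob (pair_pmf M N) ((A \<times> B) \<inter> set_pmf (pair_pmf M N))"
    by (simp only: measure_Int_set_pmf)
  also have "(A \<times> B) \<inter> set_pmf (pair_pmf M N) = (A \<inter> set_pmf M) \<times> (B \<inter> set_pmf N)"
    by auto
  also have "measure_pmf.prob (pair_pmf M N) \<dots> = measure_pmf.prob M (A \<inter> set_pmf M) * measure_pmf.prob N (B \<inter> set_pmf N)"
    by (rule measure_pmf_prob_product) auto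
  also have "\<dots> = measure_pmf.prob M A * measure_pmf.prob N B"
    by (simp add: measure_Int_set_pmf)
  finally show ?thesis .
qed

lemma DF_cong: "(\<And>i. i < j \<Longrightarrow> F i = F' i) \<Longrightarrow> DF F j = DF F' j"
  by (induction j) auto

lemma flip_Pos_iff[simp]: "flip x = Pos \<longleftrightarrow> x = Neg"
  by (cases x) auto

lemma flip_lemma:
  assumes a: "0 \<le> a" "a \<le> 1/2"
  shows "finite S \<Longrightarrow> S \<subseteq> {1..t} \<Longrightarrow>
         measure_pmf.prob (FP a t) {F. \<forall>j\<in>S. DF F j = Pos} \<le> (1 - a) ^ card S"
proof (induction t arbitrary: S)
  case 0
  then have "S = {}" by auto
  then show ?case by simp
next
  case (Suc t)
  have FPs: "FP a (Suc t) = map_pmf (\<lambda>(y, F). F(t := y)) (pair_pmf (bernoulli_pmf a) (FP a t))"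
    unfolding FP_def lessThan_Suc by (subst Pi_pmf_insert) auto
  have dc: "DF (F(t := y)) j = DF F j" if "j \<le> t" for F y j
    by (rule DF_cong) (use that in auto)
  have dt: "DF (F(t := y)) (Suc t) = (if y then flip (DF F t) else DF F t)" for F y
    by (cases y) (simp_all add: dc)
  show ?case
  proof (cases "Suc t \<in> S")
    case False
    have S: "S \<subseteq> {1..t}"
    proof
      fix x assume x: "x \<in> S"
      with Suc.prems(2) have "1 \<le> x" "x \<le> Suc t" by auto
      moreover have "x \<noteq> Suc t" using x False by auto
      ultimately show "x \<in> {1..t}" by auto
    qed
    let ?E = "{F. \<forall>j\<in>S. DF F j = Pos}"
    have "\<forall>j\<in>S. DF (F(t := y)) j = DF F j" for F y using S dc by auto
    then have "(\<lambda>(y, F). F(t := y)) -` ?E = UNIV \<times> ?E"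
      by auto
    then have "measure_pmf.prob (FP a (Suc t)) ?E = measure_pmf.prob (FP a t) ?E"
      unfolding FPs by (simp add: prob_pair_prod)
    then show ?thesis using Suc.IH[OF Suc.prems(1) S] by simp
  next
    case True
    define S' where "S' = S - {Suc t}"
    have S': "S' \<subseteq> {1..t}" "finite S'" using Suc.prems by (auto simp: S'_def)
    have "card S > 0" using True Suc.prems(1) card_gt_0_iff by blast
    then have cS: "card S = Suc (card S')" using True Suc.prems(1) unfolding S'_def
      by simp
    let ?E = "{F. \<forall>j\<in>S'. DF F j = Pos}"
    let ?N = "?E \<inter> {F. DF F t = Neg}" and ?P = "?E \<inter> {F. DF F t = Pos}"
    have "(\<lambda>(y, F). F(t := y)) -` {F. \<forall>j\<in>S. DF F j = Pos} = {True} \<times> ?N \<union> {False} \<times> ?P"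
    proof -
      have e1: "\<forall>j\<in>S'. DF (F(t := y)) j = DF F j" for F y using S' dc by auto
      have Sins: "S = insert (Suc t) S'" using True unfolding S'_def by auto
      have eq: "(\<forall>j\<in>S. DF (F(t := y)) j = Pos) \<longleftrightarrow>
           (\<forall>j\<in>S'. DF F j = Pos) \<and> (if y then DF F t = Neg else DF F t = Pos)" for F y
        unfolding Sins using e1[of F y] dt[of F y] by (cases y) (auto simp del: DF.simps)
      show ?thesis
      proof (intro set_eqI)
        fix z :: "bool \<times> (nat \<Rightarrow> bool)"
        obtain y F where z: "z = (y, F)" by (cases z)
        have "z \<in> (\<lambda>(y, F). F(t := y)) -` {F. \<forall>j\<in>S. DF F j = Pos} \<longleftrightarrow> (\<forall>j\<in>S. DF (F(t := y)) j = Pos)"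
          unfolding z by simp
        also have "\<dots> \<longleftrightarrow> z \<in> {True} \<times> ?N \<union> {False} \<times> ?P"
          unfolding eq z by (cases y) auto
        finally show "z \<in> (\<lambda>(y, F). F(t := y)) -` {F. \<forall>j\<in>S. DF F j = Pos} \<longleftrightarrow> z \<in> {True} \<times> ?N \<union> {False} \<times> ?P" .
      qed
    qed
    then have "measure_pmf.prob (FP a (Suc t)) {F. \<forall>j\<in>S. DF F j = Pos}
       = measure_pmf.prob (pair_pmf (bernoulli_pmf a) (FP a t)) ({True} \<times> ?N \<union> {False} \<times> ?P)"
      unfolding FPs by simp
    also have "\<dots> = measure_pmf.prob (pair_pmf (bernoulli_pmf a) (FP a t)) ({True} \<times> ?N)
                  + measure_pmf.prob (pair_pmf (bernoulli_pmf a) (FP a t)) ({False} \<times> ?P)"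
      by (rule measure_pmf.finite_measure_Union) auto
    also have "\<dots> = a * measure_pmf.prob (FP a t) ?N + (1 - a) * measure_pmf.prob (FP a t) ?P"
      using a by (simp add: prob_pair_prod measure_pmf_single)
    also have "\<dots> \<le> (1 - a) * measure_pmf.prob (FP a t) ?N + (1 - a) * measure_pmf.prob (FP a t) ?P"
      using a by (intro add_mono mult_right_mono) auto
    also have "\<dots> = (1 - a) * measure_pmf.prob (FP a t) (?N \<union> ?P)"
      by (subst measure_pmf.finite_measure_Union) (auto simp: algebra_simps)
    also have "\<dots> \<le> (1 - a) * measure_pmf.prob (FP a t) ?E"
      using a by (intro mult_left_mono measure_pmf.finite_measure_mono) auto
    also have "\<dots> \<le> (1 - a) * (1 - a) ^ card S'"
      using a by (intro mult_left_mono Suc.IH S') auto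
    also have "\<dots> = (1 - a) ^ card S" using cS by simp
    finally show ?thesis .
  qed
qed



lemma land_cong:
  "(\<And>s i. s < S \<Longrightarrow> 1 \<le> i \<Longrightarrow> i \<le> s \<Longrightarrow> w s i = w' s i) \<Longrightarrow> land w S i = land w' S i"
proof (induction S arbitrary: i)
  case 0 then show ?case by simp
next
  case (Suc S)
  have IH: "land w S j = land w' S j" for j by (rule Suc.IH) (use Suc.prems in auto)
  have c: "(1 \<le> i \<and> i \<le> S \<and> w S i) \<longleftrightarrow> (1 \<le> i \<and> i \<le> S \<and> w' S i)"
    using Suc.prems[of S i] by auto
  show ?case using c IH by (simp del: land.simps add: land.simps(2))
qed

lemma Lt_le: "Lt w J k \<le> J + k"
  by (induction k) auto

lemma Lt_cong2:
  "(\<And>s i. J \<le> s \<Longrightarrow> s < J + k \<Longrightarrow> i \<le> s \<Longrightarrow> w s i = w' s i) \<Longrightarrow> Lt w J k = Lt w' J k"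
proof (induction k)
  case 0 then show ?case by simp
next
  case (Suc k)
  have IH: "Lt w J k = Lt w' J k" by (rule Suc.IH) (use Suc.prems in auto)
  have "w (J + k) (Lt w J k) = w' (J + k) (Lt w J k)"
    using Suc.prems[of "J + k" "Lt w J k"] Lt_le[of w J k] by auto
  then show ?case using IH by simp
qed

lemma Phi_land: "land (Phi t (F, C)) t i = land C t i"
  by (rule land_cong) (auto simp: Phi_def)

lemma Phi_Lt: "J \<le> t \<Longrightarrow> Lt (Phi t (F, C)) J (t - J) = Lt C J (t - J)"
  by (rule Lt_cong2) (auto simp: Phi_def)

lemma Phi_D: "j \<le> t \<Longrightarrow> D (Phi t (F, C)) j = DF F j"
  unfolding D_def by (rule DF_cong) (auto simp: Phi_def)



lemma E2_bound:
  fixes a b :: real and u t :: nat and J :: "nat \<Rightarrow> nat"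
  assumes a: "0 \<le> a" "a \<le> 1/2" and J: "\<And>k. J k \<le> t"
  defines "g \<equiv> (\<lambda>w k. land w t (Lt w (J k) (t - J k)))"
  shows "measure_pmf.prob (Omega a b t)
           {w. inj_on (g w) {1..u} \<and> g w ` {1..u} \<subseteq> {1..t} \<and> (\<forall>k\<in>{1..u}. D w (g w k) = Pos)}
         \<le> (1 - a) ^ u"
proof -
  let ?E = "{w. inj_on (g w) {1..u} \<and> g w ` {1..u} \<subseteq> {1..t} \<and> (\<forall>k\<in>{1..u}. D w (g w k) = Pos)}"
  have "measure_pmf.prob (Omega a b t) ?E = measure_pmf.prob (pair_pmf (FP a t) (CP b t)) (Phi t -` ?E)"
    by (simp add: Omega_split)
  also have "\<dots> \<le> (1 - a) ^ u"
  proof (rule prob_pair_le)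
    fix C assume "C \<in> set_pmf (CP b t)"
    have gP: "g (Phi t (F, C)) = g C" for F
      unfolding g_def by (simp add: Phi_land Phi_Lt J fun_eq_iff)
    show "measure_pmf.prob (FP a t) {F. (F, C) \<in> Phi t -` ?E} \<le> (1 - a) ^ u"
    proof (cases "inj_on (g C) {1..u} \<and> g C ` {1..u} \<subseteq> {1..t}")
      case False
      then have e: "{F. (F, C) \<in> Phi t -` ?E} = {}" by (auto simp: gP)
      show ?thesis unfolding e using a by simp
    next
      case True
      let ?S = "g C ` {1..u}"
      have "{F. (F, C) \<in> Phi t -` ?E} \<subseteq> {F. \<forall>j\<in>?S. DF F j = Pos}"
      proof (intro subsetI CollectI ballI)
        fix F j assume F: "F \<in> {F. (F, C) \<in> Phi t -` ?E}" and j: "j \<in> ?S"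
        obtain k where k: "k \<in> {1..u}" and jk: "j = g C k" using j by blast
        have "g C k \<in> {1..t}" using True k by blast
        then have "g C k \<le> t" by simp
        moreover have "D (Phi t (F, C)) (g C k) = Pos" using F k by (auto simp: gP)
        ultimately show "DF F j = Pos" unfolding jk by (simp add: Phi_D)
      qed
      then have "measure_pmf.prob (FP a t) {F. (F, C) \<in> Phi t -` ?E} \<le> measure_pmf.prob (FP a t) {F. \<forall>j\<in>?S. DF F j = Pos}"
        by (rule measure_pmf.finite_measure_mono) simp
      also have "\<dots> \<le> (1 - a) ^ card ?S"
        by (rule flip_lemma) (use a True in auto)
      also have "card ?S = u" using True by (simp add: card_image)
      finally show ?thesis .
    qed
  qed (use a in simp)
  finally show ?thesis .
qed



lemma main_bound:
  fixes a b :: real and u t :: nat and n :: enat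
  assumes a: "0 < a" "a < 1/2" and b: "0 < b" "b < 1" and u: "2 \<le> u" and t: "u ^ 8 \<le> t"
  shows "measure_pmf.prob (spread_path a b n t) {f. b * real t + 2 * real u ^ 6 < real (frontier n f)}
         \<le> real u * (2 * exp (-2 * ((1 - b) * real u ^ 5 / 2)\<^sup>2 / real t)) + (1 - a) ^ u"
proof -
  define \<Delta> where "\<Delta> = u ^ 5"
  define J where "J = (\<lambda>k. min (k * \<Delta>) t)"
  define \<delta> where "\<delta> = (1 - b) * real \<Delta> / 2"
  define L where "L = (\<lambda>w k. Lt w (J k) (t - J k))"
  define g where "g = (\<lambda>w k. land w t (Lt w (J k) (t - J k)))"
  define Bad where "Bad = (\<lambda>k. {w. \<delta> \<le> \<bar>real (Lt w (J k) (t - J k)) - real (J k) - real (t - J k) * b\<bar>})"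
  define E2 where "E2 = {w. inj_on (g w) {1..u} \<and> g w ` {1..u} \<subseteq> {1..t} \<and> (\<forall>k\<in>{1..u}. D w (g w k) = Pos)}"
  define m where "m = b * real t + 2 * real u ^ 6"
  have u6: "u ^ 6 < t"
  proof -
    have "u ^ 6 < u ^ 8" using u by (intro power_strict_increasing) auto
    then show ?thesis using t by linarith
  qed
  have Jk: "J k = k * \<Delta>" "1 \<le> J k" "J k < t" "k * \<Delta> \<le> u ^ 6" if "k \<in> {1..u}" for k
  proof -
    have "k * \<Delta> \<le> u * u ^ 5" unfolding \<Delta>_def using that by (intro mult_right_mono) auto
    then show "k * \<Delta> \<le> u ^ 6" by (simp add: power_eq_if)
    then show "J k = k * \<Delta>" using u6 unfolding J_def by auto
    moreover have "1 \<le> k * \<Delta>" using that u unfolding \<Delta>_def by simp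
    ultimately show "1 \<le> J k" "J k < t" using \<open>k * \<Delta> \<le> u ^ 6\<close> u6 by auto
  qed
  have Jle: "J k \<le> t" for k unfolding J_def by simp
  have incl: "{w. m < real (frontier n (run n w t))} \<subseteq> (\<Union>k\<in>{1..u}. Bad k) \<union> E2"
  proof
    fix w assume w: "w \<in> {w. m < real (frontier n (run n w t))}"
    define fr where "fr = frontier n (run n w t)"
    have mfr: "m < real fr" using w unfolding fr_def by simp
    show "w \<in> (\<Union>k\<in>{1..u}. Bad k) \<union> E2"
    proof (cases "\<exists>k\<in>{1..u}. w \<in> Bad k")
      case True then show ?thesis by blast
    next
      case False
      then have dev: "\<bar>real (L w k) - real (J k) - real (t - J k) * b\<bar> < \<delta>" if "k \<in> {1..u}" for k
        using that unfolding Bad_def L_def by force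
      have props: "J k \<le> L w k \<and> L w k \<le> t \<and> J k \<le> g w k \<and> land w t (L w k - 1) < J k"
        if "k \<in> {1..u}" for k
        using Lt_props[of "J k" w "t - J k"] Jk[OF that] Jle[of k]
        unfolding L_def g_def by auto
      have rJ: "real (t - J k) = real t - real k * real u ^ 5" "real (J k) = real k * real u ^ 5"
        if "k \<in> {1..u}" for k
        using Jk[OF that] Jle[of k] by (auto simp: \<Delta>_def of_nat_diff)
      have ku: "real k * real u ^ 5 \<le> real u ^ 6" if "k \<in> {1..u}" for k
      proof -
        have "real (k * \<Delta>) \<le> real (u ^ 6)" using Jk(4)[OF that] by (simp only: of_nat_le_iff)
        then show ?thesis unfolding \<Delta>_def by simp
      qed
      have mid: "real (J k) + real (t - J k) * b = b * real t + (1 - b) * (real k * real u ^ 5)"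
        if "k \<in> {1..u}" for k
        unfolding rJ[OF that] by (simp add: algebra_simps)
      have Lup: "real (L w k) < b * real t + (1 - b) * (real k * real u ^ 5) + \<delta>" if "k \<in> {1..u}" for k
      proof -
        have "real (L w k) < real (J k) + real (t - J k) * b + \<delta>"
          using dev[OF that] by (simp add: abs_less_iff)
        then show ?thesis using mid[OF that] by linarith
      qed
      have Llo: "b * real t + (1 - b) * (real k * real u ^ 5) - \<delta> < real (L w k)" if "k \<in> {1..u}" for k
      proof -
        have "real (J k) + real (t - J k) * b - \<delta> < real (L w k)"
          using dev[OF that] by (simp add: abs_less_iff)
        then show ?thesis using mid[OF that] by linarith
      qed
      have dd: "2 * \<delta> = (1 - b) * real u ^ 5" unfolding \<delta>_def \<Delta>_def by simp
      have Lfr: "L w k < fr" if "k \<in> {1..u}" for k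
      proof -
        have "u ^ 5 \<le> u ^ 6" using u by (intro power_increasing) auto
        then have u56: "real u ^ 5 \<le> real u ^ 6" by (simp only: of_nat_le_iff flip: of_nat_power)
        have "(1 - b) * (real k * real u ^ 5) \<le> real k * real u ^ 5"
          by (rule mult_left_le_one_le) (use b in auto)
        moreover have "\<delta> \<le> real u ^ 5"
        proof -
          have "\<delta> = ((1 - b) / 2) * real u ^ 5" unfolding \<delta>_def \<Delta>_def by simp
          also have "\<dots> \<le> real u ^ 5" by (rule mult_left_le_one_le) (use b in auto)
          finally show ?thesis .
        qed
        ultimately have "real (L w k) < m" using Lup[OF that] ku[OF that] u56 unfolding m_def by linarith
        then show ?thesis using mfr by simp
      qed
      have Lmono: "L w k < L w (Suc k)" if "k \<in> {1..u}" "Suc k \<in> {1..u}" for k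
      proof -
        have "real (L w k) < b * real t + (1 - b) * (real k * real u ^ 5) + \<delta>" by (rule Lup[OF that(1)])
        moreover have "b * real t + (1 - b) * (real (Suc k) * real u ^ 5) - \<delta> < real (L w (Suc k))"
          by (rule Llo[OF that(2)])
        ultimately have "real (L w k) < real (L w (Suc k))" using dd by (simp add: algebra_simps)
        then show ?thesis by simp
      qed
      have gk: "J k \<le> g w k" "k < u \<Longrightarrow> g w k < J (Suc k)" if "k \<in> {1..u}" for k
      proof -
        show "J k \<le> g w k" using props[OF that] by simp
        assume "k < u"
        then have s: "Suc k \<in> {1..u}" using that by auto
        have "g w k = land w t (L w k)" unfolding g_def L_def by simp
        also have "\<dots> \<le> land w t (L w (Suc k) - 1)"
          using Lmono[OF that s] by (intro land_mono) simp
        also have "\<dots> < J (Suc k)" using props[OF s] by simp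
        finally show "g w k < J (Suc k)" .
      qed
      have Jmono: "J k \<le> J k'" if "k \<le> k'" for k k'
        unfolding J_def using that by (intro min.mono mult_right_mono) auto
      have gmono: "g w k < g w k'" if "k \<in> {1..u}" "k' \<in> {1..u}" "k < k'" for k k'
      proof -
        have "g w k < J (Suc k)" using gk(2)[OF that(1)] that by auto
        also have "\<dots> \<le> J k'" using that by (intro Jmono) auto
        also have "\<dots> \<le> g w k'" using gk(1)[OF that(2)] .
        finally show ?thesis .
      qed
      have inj: "inj_on (g w) {1..u}"
      proof (rule inj_onI)
        fix x y assume "x \<in> {1..u}" "y \<in> {1..u}" "g w x = g w y"
        then show "x = y" using gmono[of x y] gmono[of y x] by (cases "x < y"; cases "y < x") auto
      qed
      have rng: "g w ` {1..u} \<subseteq> {1..t}"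
      proof
        fix j assume "j \<in> g w ` {1..u}"
        then obtain k where k: "k \<in> {1..u}" "j = g w k" by blast
        have "1 \<le> g w k" using gk(1)[OF k(1)] Jk(2)[OF k(1)] by linarith
        moreover have "g w k \<le> t" using land_le[of w t "L w k"] props[OF k(1)] unfolding g_def L_def by linarith
        ultimately show "j \<in> {1..t}" using k by simp
      qed
      have pos: "D w (g w k) = Pos" if "k \<in> {1..u}" for k
      proof -
        have le: "L w k \<le> fr" using Lfr[OF that] by simp
        have "run n w t (L w k) = Pos" using frontier_run(3)[of "L w k" n w t] le unfolding fr_def by simp
        moreover have "enat (L w k) \<le> n"
          using frontier_run(2)[of n w t] le unfolding fr_def by (meson enat_ord_simps(1) order_trans)
        ultimately show ?thesis
          using run_D[of "L w k" t n w] props[OF that] unfolding g_def L_def by simp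
      qed
      show ?thesis using inj rng pos unfolding E2_def by blast
    qed
  qed
  have "measure_pmf.prob (spread_path a b n t) {f. m < real (frontier n f)}
        = measure_pmf.prob (Omega a b t) {w. m < real (frontier n (run n w t))}"
    by (simp add: spread_path_eq)
  also have "\<dots> \<le> measure_pmf.prob (Omega a b t) ((\<Union>k\<in>{1..u}. Bad k) \<union> E2)"
    by (rule measure_pmf.finite_measure_mono[OF incl]) simp
  also have "\<dots> \<le> measure_pmf.prob (Omega a b t) (\<Union>k\<in>{1..u}. Bad k) + measure_pmf.prob (Omega a b t) E2"
    by (rule measure_Un_le) auto
  also have "measure_pmf.prob (Omega a b t) (\<Union>k\<in>{1..u}. Bad k) \<le> (\<Sum>k\<in>{1..u}. measure_pmf.prob (Omega a b t) (Bad k))"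
    by (rule measure_pmf.finite_measure_subadditive_finite) auto
  also have "\<dots> \<le> (\<Sum>k\<in>{1..u}. 2 * exp (-2 * \<delta>\<^sup>2 / real t))"
  proof (rule sum_mono)
    fix k assume k: "k \<in> {1..u}"
    have "measure_pmf.prob (Omega a b t) (Bad k) \<le> 2 * exp (-2 * \<delta>\<^sup>2 / real (t - J k))"
    proof -
      have "0 \<le> \<delta>" using b unfolding \<delta>_def by simp
      moreover have "b \<in> {0..1}" using b by simp
      ultimately show ?thesis unfolding Bad_def using Jk(2,3)[OF k] by (intro Lt_tail) auto
    qed
    also have "\<dots> \<le> 2 * exp (-2 * \<delta>\<^sup>2 / real t)"
    proof -
      have pos: "0 < real (t - J k)" using Jk(3)[OF k] by simp
      have "\<delta>\<^sup>2 / real t \<le> \<delta>\<^sup>2 / real (t - J k)"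
        by (intro divide_left_mono) (use pos in auto)
      then show ?thesis by simp
    qed
    finally show "measure_pmf.prob (Omega a b t) (Bad k) \<le> 2 * exp (-2 * \<delta>\<^sup>2 / real t)" .
  qed
  also have "\<dots> = real u * (2 * exp (-2 * ((1 - b) * real u ^ 5 / 2)\<^sup>2 / real t))"
    by (simp add: \<delta>_def \<Delta>_def)
  also have "measure_pmf.prob (Omega a b t) E2 \<le> (1 - a) ^ u"
    unfolding E2_def g_def by (rule E2_bound) (use a Jle in auto)
  finally show ?thesis unfolding m_def by simp
qed



lemma arith_final:
  fixes \<mu> c l :: real and u :: nat
  assumes m: "0 < \<mu>" "\<mu> \<le> c" "\<mu> \<le> l" and u: "1 \<le> u" "24 / \<mu>\<^sup>2 \<le> real u"
  shows "real u * (2 * exp (- (c * real u ^ 2))) + exp (- (l * real u)) \<le> exp (- (\<mu> / 4 * (real u + 1)))"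
proof -
  have ru: "1 \<le> real u" using u by simp
  have "\<mu> * real u \<le> c * real u ^ 2"
  proof -
    have "\<mu> * real u \<le> c * real u" using m ru by (intro mult_right_mono) auto
    also have "\<dots> \<le> c * real u ^ 2" using m ru by (intro mult_left_mono) (auto simp: power2_eq_square)
    finally show ?thesis .
  qed
  then have e1: "exp (- (c * real u ^ 2)) \<le> exp (- (\<mu> * real u))" by simp
  have "\<mu> * real u \<le> l * real u" using m ru by (intro mult_right_mono) auto
  then have e2: "exp (- (l * real u)) \<le> exp (- (\<mu> * real u))" by simp
  have "real u * (2 * exp (- (c * real u ^ 2))) \<le> real u * (2 * exp (- (\<mu> * real u)))"
    using e1 ru by (intro mult_left_mono) auto
  then have "real u * (2 * exp (- (c * real u ^ 2))) + exp (- (l * real u)) \<le>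
             real u * (2 * exp (- (\<mu> * real u))) + exp (- (\<mu> * real u))"
    using e2 by linarith
  also have "\<dots> = (2 * real u + 1) * exp (- (\<mu> * real u))" by (simp add: algebra_simps)
  also have "2 * real u + 1 \<le> exp (\<mu> * real u / 2)"
  proof -
    have "24 \<le> \<mu>\<^sup>2 * real u" using u(2) m by (simp add: field_simps)
    then have "24 * real u \<le> \<mu>\<^sup>2 * real u * real u" using ru by (intro mult_right_mono) auto
    moreover have "(\<mu> * real u / 2)\<^sup>2 / 2 = \<mu>\<^sup>2 * real u * real u / 8"
      by (simp add: power2_eq_square)
    ultimately have "3 * real u \<le> (\<mu> * real u / 2)\<^sup>2 / 2" by linarith
    also have "\<dots> \<le> 1 + \<mu> * real u / 2 + (\<mu> * real u / 2)\<^sup>2 / 2"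
    proof -
      have "0 \<le> \<mu> * real u / 2" using m ru by simp
      then show ?thesis by linarith
    qed
    also have "\<dots> \<le> exp (\<mu> * real u / 2)" by (rule exp_lower_Taylor_quadratic) (use m ru in simp)
    finally show ?thesis using ru by simp
  qed
  then have "(2 * real u + 1) * exp (- (\<mu> * real u)) \<le> exp (\<mu> * real u / 2) * exp (- (\<mu> * real u))"
    by (intro mult_right_mono) auto
  also have "\<dots> = exp (- (\<mu> * real u / 2))" by (simp add: exp_add[symmetric])
  also have "\<dots> \<le> exp (- (\<mu> / 4 * (real u + 1)))"
    using m ru by (simp add: algebra_simps)
  finally show ?thesis .
qed



theorem mainTheorem8:
  fixes a b :: real
  assumes "0 < a" "a < 1/2" "0 < b" "b < 1"
  shows "\<exists>K c1 c2 c3 :: real. K > 0 \<and> c1 > 0 \<and> c2 > 0 \<and> c3 > 0 \<and>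
    (\<forall>(n::enat) (t::nat). t \<ge> 1 \<longrightarrow>
      measure_pmf.prob (spread_path a b n t)
        {f. real (frontier n f) \<le> b * real t + K * real t powr (1 - c3)
            \<and> enat (frontier n f) \<le> n}
      \<ge> 1 - exp (- c1 * real t powr c2))"
proof -
  define l where "l = - ln (1 - a)"
  define c where "c = (1 - b)\<^sup>2 / 512"
  define \<mu> where "\<mu> = min c l"
  define U0 :: nat where "U0 = max 2 (nat \<lceil>24 / \<mu>\<^sup>2\<rceil>)"
  define K where "K = real U0 ^ 2 + 2"
  have l: "0 < l" unfolding l_def using assms by (simp add: ln_less_zero)
  have c: "0 < c" unfolding c_def using assms by simp
  have m: "0 < \<mu>" "\<mu> \<le> c" "\<mu> \<le> l" unfolding \<mu>_def using l c by auto
  have K: "0 < K" unfolding K_def by (metis add_nonneg_pos zero_le_power2 zero_less_numeral)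
  have main: "\<forall>(n::enat) (t::nat). t \<ge> 1 \<longrightarrow>
      measure_pmf.prob (spread_path a b n t)
        {f. real (frontier n f) \<le> b * real t + K * real t powr (1 - 1/4)
            \<and> enat (frontier n f) \<le> n}
      \<ge> 1 - exp (- (\<mu> / 4) * real t powr (1/8))"
  proof (intro allI impI)
    fix n :: enat and t :: nat
    assume t1: "1 \<le> t"
    have tpos: "0 < real t" using t1 by simp
    define r where "r = real t powr (1/8)"
    have r1: "1 \<le> r" unfolding r_def using t1 by (simp add: ge_one_powr_ge_zero)
    define u where "u = nat \<lfloor>r\<rfloor>"
    have ur: "real u \<le> r" "r < real u + 1" unfolding u_def using r1 by linarith+
    have u1: "1 \<le> u" unfolding u_def using r1 by linarith
    have r8: "r ^ 8 = real t" unfolding r_def using tpos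
      by (simp add: powr_realpow[symmetric] powr_powr)
    have r2: "r ^ 2 = real t powr (1/4)" unfolding r_def using tpos
      by (simp add: powr_realpow[symmetric] powr_powr)
    have r6: "r ^ 6 = real t powr (3/4)" unfolding r_def using tpos
      by (simp add: powr_realpow[symmetric] powr_powr)
    have ut: "u ^ 8 \<le> t"
    proof -
      have "real u ^ 8 \<le> r ^ 8" using ur by (intro power_mono) auto
      then have "real (u ^ 8) \<le> real t" using r8 by simp
      then show ?thesis by (simp only: of_nat_le_iff)
    qed
    have tu: "real t < (real u + 1) ^ 8"
      using r8 ur r1 by (metis power_strict_mono zero_le_one order_trans zero_less_numeral)
    have t34: "real t = real t powr (1/4) * real t powr (3/4)"
      using tpos by (simp add: powr_add[symmetric])
    have tp34: "0 \<le> real t powr (3/4)" by simp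
    have e3: "(1::real) - 1/4 = 3/4" by simp
    let ?E = "{f. real (frontier n f) \<le> b * real t + K * real t powr (1 - 1/4) \<and> enat (frontier n f) \<le> n}"
    have Pe: "measure_pmf.prob (spread_path a b n t) ?E =
          measure_pmf.prob (Omega a b t) {w. run n w t \<in> ?E}"
      by (simp add: spread_path_eq)
    have fr: "real (frontier n (run n w t)) \<le> real t" "enat (frontier n (run n w t)) \<le> n" for w
      using frontier_run(1,2)[of n w t] by auto
    show "1 - exp (- (\<mu> / 4) * real t powr (1/8)) \<le> measure_pmf.prob (spread_path a b n t) ?E"
    proof (cases "u < U0")
      case True
      have "real t \<le> b * real t + K * real t powr (3/4)"
      proof -
        have "r ^ 2 \<le> (real u + 1) ^ 2" using ur r1 by (intro power_mono) auto
        also have "\<dots> \<le> real U0 ^ 2" using True by (intro power_mono) auto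
        finally have "real t powr (1/4) \<le> real U0 ^ 2" using r2 by simp
        then have "real t \<le> real U0 ^ 2 * real t powr (3/4)"
          using t34 tp34 by (metis mult_right_mono)
        also have "\<dots> \<le> K * real t powr (3/4)" unfolding K_def using tp34 by (intro mult_right_mono) auto
        finally show ?thesis using assms tpos by (smt (verit) mult_nonneg_nonneg)
      qed
      then have "real (frontier n (run n w t)) \<le> b * real t + K * real t powr (3/4)" for w
        using fr(1)[of w] by linarith
      then have "{w. run n w t \<in> ?E} = UNIV" using fr(2) unfolding e3 by auto
      then have "measure_pmf.prob (spread_path a b n t) ?E = 1" using Pe by simp
      then show ?thesis by simp
    next
      case False
      then have uU: "U0 \<le> u" by simp
      have u2: "2 \<le> u" using uU unfolding U0_def by simp
      have u24: "24 / \<mu>\<^sup>2 \<le> real u"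
      proof -
        have "24 / \<mu>\<^sup>2 \<le> real (nat \<lceil>24 / \<mu>\<^sup>2\<rceil>)" by linarith
        also have "\<dots> \<le> real u"
        proof -
          have "nat \<lceil>24 / \<mu>\<^sup>2\<rceil> \<le> u" using uU unfolding U0_def by simp
          then show ?thesis by (simp only: of_nat_le_iff)
        qed
        finally show ?thesis .
      qed
      define B where "B = {w. b * real t + 2 * real u ^ 6 < real (frontier n (run n w t))}"
      have MB: "measure_pmf.prob (Omega a b t) B
         \<le> real u * (2 * exp (-2 * ((1 - b) * real u ^ 5 / 2)\<^sup>2 / real t)) + (1 - a) ^ u"
        using main_bound[OF assms u2 ut, of n] unfolding B_def by (simp add: spread_path_eq)
      have u6: "2 * real u ^ 6 \<le> K * real t powr (3/4)"
      proof -
        have "real u ^ 6 \<le> r ^ 6" using ur by (intro power_mono) auto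
        then have "2 * real u ^ 6 \<le> 2 * real t powr (3/4)" using r6 by simp
        also have "\<dots> \<le> K * real t powr (3/4)" unfolding K_def using tp34
          by (intro mult_right_mono) auto
        finally show ?thesis .
      qed
      have sub: "UNIV - B \<subseteq> {w. run n w t \<in> ?E}"
        using fr u6 unfolding B_def e3 by auto
      have "1 - measure_pmf.prob (Omega a b t) B = measure_pmf.prob (Omega a b t) (UNIV - B)"
        using measure_pmf.prob_compl[of B "Omega a b t"] by simp
      also have "\<dots> \<le> measure_pmf.prob (Omega a b t) {w. run n w t \<in> ?E}"
        by (rule measure_pmf.finite_measure_mono[OF sub]) simp
      finally have P1: "1 - measure_pmf.prob (Omega a b t) B \<le> measure_pmf.prob (spread_path a b n t) ?E"
        using Pe by simp
      have ex1: "exp (-2 * ((1 - b) * real u ^ 5 / 2)\<^sup>2 / real t) \<le> exp (- (c * real u ^ 2))"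
      proof -
        have "real u + 1 \<le> 2 * real u" using u1 by simp
        then have "(real u + 1) ^ 8 \<le> (2 * real u) ^ 8" by (intro power_mono) auto
        then have "real t < (2 * real u) ^ 8" using tu by linarith
        then have t256: "real t \<le> 256 * real u ^ 8" by (simp add: power_mult_distrib)
        have "c * real u ^ 2 * real t \<le> c * real u ^ 2 * (256 * real u ^ 8)"
          using t256 c by (intro mult_left_mono) auto
        also have "\<dots> = (1 - b)\<^sup>2 * (real u ^ 2 * real u ^ 8) / 2"
          unfolding c_def by (simp add: field_simps)
        also have "\<dots> = 2 * ((1 - b) * real u ^ 5 / 2)\<^sup>2"
        proof -
          have h1: "(real u ^ 5)\<^sup>2 = real u ^ 10" by (simp flip: power_mult)
          have h2: "real u ^ 2 * real u ^ 8 = real u ^ 10" by (simp flip: power_add)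
          show ?thesis by (simp add: power_mult_distrib power_divide h1 h2)
        qed
        finally have "c * real u ^ 2 \<le> 2 * ((1 - b) * real u ^ 5 / 2)\<^sup>2 / real t"
          using tpos by (simp add: pos_le_divide_eq)
        then show ?thesis by simp
      qed
      have pa: "(1 - a) ^ u = exp (- (l * real u))"
      proof -
        have "(1 - a) ^ u = exp (ln (1 - a)) ^ u" using assms by simp
        also have "\<dots> = exp (real u * ln (1 - a))" by (simp add: exp_of_nat_mult)
        finally show ?thesis unfolding l_def by (simp add: algebra_simps)
      qed
      have "measure_pmf.prob (Omega a b t) B \<le> real u * (2 * exp (- (c * real u ^ 2))) + exp (- (l * real u))"
        using MB ex1 pa u1 by (smt (verit) mult_left_mono of_nat_0_le_iff)
      also have "\<dots> \<le> exp (- (\<mu> / 4 * (real u + 1)))"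
        by (rule arith_final[OF m u1 u24])
      also have "\<dots> \<le> exp (- (\<mu> / 4) * real t powr (1/8))"
        using ur m unfolding r_def by simp
      finally show ?thesis using P1 by linarith
    qed
  qed
  have pos: "0 < K" "0 < \<mu> / 4" "(0::real) < 1/8" "(0::real) < 1/4" using K m by auto
  show ?thesis
    apply (rule exI[of _ K], rule exI[of _ "\<mu> / 4"], rule exI[of _ "1/8"], rule exI[of _ "1/4"])
    using pos main by blast
qed

end
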